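(* Let $f(t)=\sum_{k=0}^n a_kt^k$ with $a_k\in\mathbb{H}$ be a left quaternion polynomial, and let $r,s\in\mathbb{R}$ with $s\ne0$. Then there exist real numbers $\alpha_1,\dots,\alpha_4,\beta_1,\dots,\beta_4$ such that $$J(f)(r+\mathbf{i}s)=\begin{bmatrix}\alpha_1&-\beta_1&-\alpha_2&\beta_2\\ \beta_1&\alpha_1&\beta_2&\alpha_2\\ \alpha_3&-\beta_3&\alpha_4&-\beta_4\\ -\beta_3&-\alpha_3&\beta_4&\alpha_4\end{bmatrix}.$$
   Context: $\mathbb{H}$ is the real quaternion algebra, identified with $\mathbb{R}^4$ via $x+\mathbf{i}y+\mathbf{j}z+\mathbf{k}w\mapsto(x,y,z,w)$. A left polynomial $f(t)=\sum a_kt^k$ is evaluated at $c\in\mathbb{H}$ as $\sum a_kc^k$ and is viewed as a map $\mathbb{R}^4\to\mathbb{R}^4$ via $f=f_1+\mathbf{i}f_2+\mathbf{j}f_3+\mathbf{k}f_4\mapsto(f_1,f_2,f_3,f_4)$; $J(f)(c)=[\partial f_i/\partial x_j](c)$ with $(x_1,\dots,x_4)=(x,y,z,w)$. *)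

theory Defs
  imports "HOL-Analysis.Analysis"
begin

text \<open>Real quaternions x + i y + j z + k w, represented by their four real coordinates.\<close>
datatype quat = Quat (q1: real) (q2: real) (q3: real) (q4: real)

definition qmul :: "quat \<Rightarrow> quat \<Rightarrow> quat" where
  "qmul p q = Quat
     (q1 p * q1 q - q2 p * q2 q - q3 p * q3 q - q4 p * q4 q)
     (q1 p * q2 q + q2 p * q1 q + q3 p * q4 q - q4 p * q3 q)
     (q1 p * q3 q - q2 p * q4 q + q3 p * q1 q + q4 p * q2 q)
     (q1 p * q4 q + q2 p * q3 q - q3 p * q2 q + q4 p * q1 q)"

definition qone :: quat where "qone = Quat 1 0 0 0"

fun qpow :: "quat \<Rightarrow> nat \<Rightarrow> quat" where
  "qpow c 0 = qone"
| "qpow c (Suc k) = qmul (qpow c k) c"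

definition qcoord :: "quat \<Rightarrow> nat \<Rightarrow> real" where
  "qcoord q i = (if i = 1 then q1 q else if i = 2 then q2 q else if i = 3 then q3 q else q4 q)"

definition qofcoords :: "(nat \<Rightarrow> real) \<Rightarrow> quat" where
  "qofcoords x = Quat (x 1) (x 2) (x 3) (x 4)"

definition leval :: "(nat \<Rightarrow> quat) \<Rightarrow> nat \<Rightarrow> quat \<Rightarrow> quat" where
  "leval a n c = qofcoords (\<lambda>i. \<Sum>k\<le>n. qcoord (qmul (a k) (qpow c k)) i)"

definition jacobian :: "(quat \<Rightarrow> quat) \<Rightarrow> quat \<Rightarrow> nat \<Rightarrow> nat \<Rightarrow> real" where
  "jacobian F c i j =
     deriv (\<lambda>t. qcoord (F (qofcoords (\<lambda>l. qcoord c l + (if l = j then t else 0)))) i) 0"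

end

theory Submission
  imports Defs
begin

definition qadd :: "quat \<Rightarrow> quat \<Rightarrow> quat" where
  "qadd p q = Quat (q1 p + q1 q) (q2 p + q2 q) (q3 p + q3 q) (q4 p + q4 q)"
definition qsc :: "real \<Rightarrow> quat \<Rightarrow> quat" where
  "qsc t q = Quat (t * q1 q) (t * q2 q) (t * q3 q) (t * q4 q)"

fun PD :: "quat \<Rightarrow> quat \<Rightarrow> nat \<Rightarrow> quat" where
  "PD c d 0 = Quat 0 0 0 0"
| "PD c d (Suc k) = qadd (qmul (PD c d k) c) (qmul (qpow c k) d)"

lemma qpow_at0: "qadd c (qsc 0 d) = c"
  by (simp add: qadd_def qsc_def)

lemma dl:
  "((\<lambda>t. q1 (qadd c (qsc t d))) has_real_derivative q1 d) (at x)"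
  "((\<lambda>t. q2 (qadd c (qsc t d))) has_real_derivative q2 d) (at x)"
  "((\<lambda>t. q3 (qadd c (qsc t d))) has_real_derivative q3 d) (at x)"
  "((\<lambda>t. q4 (qadd c (qsc t d))) has_real_derivative q4 d) (at x)"
  by (simp_all add: qadd_def qsc_def, (rule derivative_eq_intros | simp)+)

lemma mprod: "(f has_real_derivative f') (at 0) \<Longrightarrow> (g has_real_derivative g') (at 0) \<Longrightarrow>
  ((\<lambda>t. f t * g t) has_real_derivative f' * g 0 + f 0 * g') (at 0)"
  by (rule DERIV_mult'[THEN DERIV_cong]) (auto simp: algebra_simps)

lemma deriv_pow:
  "((\<lambda>t. q1 (qpow (qadd c (qsc t d)) k)) has_real_derivative q1 (PD c d k)) (at 0) \<and>
   ((\<lambda>t. q2 (qpow (qadd c (qsc t d)) k)) has_real_derivative q2 (PD c d k)) (at 0) \<and>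
   ((\<lambda>t. q3 (qpow (qadd c (qsc t d)) k)) has_real_derivative q3 (PD c d k)) (at 0) \<and>
   ((\<lambda>t. q4 (qpow (qadd c (qsc t d)) k)) has_real_derivative q4 (PD c d k)) (at 0)"
proof (induction k)
  case 0
  then show ?case by (simp add: qone_def)
next
  case (Suc k)
  then have h1: "((\<lambda>t. q1 (qpow (qadd c (qsc t d)) k)) has_real_derivative q1 (PD c d k)) (at 0)"
    and h2: "((\<lambda>t. q2 (qpow (qadd c (qsc t d)) k)) has_real_derivative q2 (PD c d k)) (at 0)"
    and h3: "((\<lambda>t. q3 (qpow (qadd c (qsc t d)) k)) has_real_derivative q3 (PD c d k)) (at 0)"
    and h4: "((\<lambda>t. q4 (qpow (qadd c (qsc t d)) k)) has_real_derivative q4 (PD c d k)) (at 0)"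
    by auto
  show ?case
    unfolding qpow.simps PD.simps qmul_def quat.sel
    by (intro conjI; rule DERIV_cong,
        (rule DERIV_add DERIV_diff mprod h1 h2 h3 h4 dl)+,
        simp add: qpow_at0 qadd_def qsc_def algebra_simps)
qed

definition ev :: "nat \<Rightarrow> quat" where
  "ev j = Quat (if j = 1 then 1 else 0) (if j = 2 then 1 else 0) (if j = 3 then 1 else 0) (if j = 4 then 1 else 0)"

lemma pt: "j \<in> {1..4} \<Longrightarrow> qofcoords (\<lambda>l. qcoord c l + (if l = j then t else 0)) = qadd c (qsc t (ev j))"
  by (auto simp: qofcoords_def qcoord_def qadd_def qsc_def ev_def)

lemma coord_leval: "i \<in> {1..4} \<Longrightarrow> qcoord (leval a n x) i = (\<Sum>k\<le>n. qcoord (qmul (a k) (qpow x k)) i)"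
  by (auto simp: leval_def qofcoords_def qcoord_def)

lemma term_deriv: "i \<in> {1..4} \<Longrightarrow>
  ((\<lambda>t. qcoord (qmul b (qpow (qadd c (qsc t d)) k)) i) has_real_derivative qcoord (qmul b (PD c d k)) i) (at 0)"
  using deriv_pow[of c d k]
  by (auto simp: qcoord_def qmul_def intro!: DERIV_add DERIV_diff DERIV_cmult)

lemma jac: "i \<in> {1..4} \<Longrightarrow> j \<in> {1..4} \<Longrightarrow>
  jacobian (leval a n) c i j = (\<Sum>k\<le>n. qcoord (qmul (a k) (PD c (ev j) k)) i)"
  unfolding jacobian_def pt coord_leval
  by (rule DERIV_imp_deriv, rule DERIV_sum, rule term_deriv)

lemma rel2: "PD (Quat r s 0 0) (ev 2) k = qmul (PD (Quat r s 0 0) (ev 1) k) (Quat 0 1 0 0)"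
  by (induction k) (simp_all add: qadd_def qmul_def ev_def algebra_simps)

lemma rel4: "PD (Quat r s 0 0) (ev 4) k = qmul (PD (Quat r s 0 0) (ev 3) k) (Quat 0 (-1) 0 0)"
  by (induction k) (simp_all add: qadd_def qmul_def ev_def algebra_simps)

theorem proposition4p1:
  fixes a :: "nat \<Rightarrow> quat" and n :: nat and r s :: real
  assumes "s \<noteq> 0"
  shows "\<exists>\<alpha>1 \<alpha>2 \<alpha>3 \<alpha>4 \<beta>1 \<beta>2 \<beta>3 \<beta>4 :: real.
    \<forall>i\<in>{1..4}. \<forall>j\<in>{1..4}.
      jacobian (leval a n) (Quat r s 0 0) i j =
      [[\<alpha>1, -\<beta>1, -\<alpha>2, \<beta>2],
       [\<beta>1, \<alpha>1, \<beta>2, \<alpha>2],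
       [\<alpha>3, -\<beta>3, \<alpha>4, -\<beta>4],
       [-\<beta>3, -\<alpha>3, \<beta>4, \<alpha>4]] ! (i - 1) ! (j - 1)"
proof -
  define J where "J = jacobian (leval a n) (Quat r s 0 0)"
  define c where "c = Quat r s 0 0"
  have Jf: "J i j = (\<Sum>k\<le>n. qcoord (qmul (a k) (PD c (ev j) k)) i)" if "i \<in> {1..4}" "j \<in> {1..4}" for i j
    using jac[OF that] unfolding J_def c_def by simp
  note r2 = rel2[of r s, folded c_def] and r4 = rel4[of r s, folded c_def]
  have e1: "J 1 2 = - J 2 1" "J 2 2 = J 1 1" "J 3 2 = J 4 1" "J 4 2 = - J 3 1"
           "J 1 4 = J 2 3" "J 2 4 = - J 1 3" "J 3 4 = - J 4 3" "J 4 4 = J 3 3"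
    by (simp_all add: Jf r2 r4 sum_negf[symmetric] qcoord_def qmul_def algebra_simps)
  show ?thesis
    unfolding J_def[symmetric]
    apply (rule exI[of _ "J 1 1"], rule exI[of _ "J 2 4"], rule exI[of _ "J 3 1"], rule exI[of _ "J 3 3"])
    apply (rule exI[of _ "J 2 1"], rule exI[of _ "J 1 4"], rule exI[of _ "- J 3 2"], rule exI[of _ "J 4 3"])
    apply (intro ballI)
    subgoal for i j
    proof -
      assume "i \<in> {1..4}" "j \<in> {1..4}"
      then have "i \<in> {1,2,3,4}" "j \<in> {1,2,3,4}" by auto
      then show ?thesis using e1 by auto
    qed
    done
qed

end
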